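(* Let $A$ be a functionally continuous normed algebra. Then the following are equivalent: (1) the topology of $A$ is defined by a uniform norm, i.e. a norm $\|\cdot\|$ satisfying $\|x^2\|=\|x\|^2$ for all $x\in A$ (so $A$ is a uniform normed algebra); (2) $A$ has a largest closed, idempotent, absolutely convex, bounded subset, i.e. a closed, idempotent, absolutely convex, bounded subset containing every closed, idempotent, absolutely convex, bounded subset of $A$.
   Context: All algebras are complex, commutative and have a unit. A normed algebra is an algebra with a submultiplicative norm. For a topological algebra $A$, $M^*(A)$ is the set of nonzero multiplicative linear functionals and $M(A)$ the set of nonzero continuous ones; $A$ is functionally continuous if $M^*(A)=M(A)$. A subset $S$ of an algebra is idempotent if $S\cdot S\subseteq S$, i.e. $xy\in S$ for all $x,y\in S$. Bounded means bounded in the normed (topological vector space) sense. *)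

theory Defs
  imports Complex_Main
begin

text \<open>A complex commutative unital algebra is modelled by a type of class comm_ring_1
  (ring structure, unit, 0 \<noteq> 1) together with an explicit complex scalar multiplication sm.\<close>

definition complex_algebra :: "(complex \<Rightarrow> 'a::comm_ring_1 \<Rightarrow> 'a) \<Rightarrow> bool" where
  "complex_algebra sm \<longleftrightarrow>
     (\<forall>a x y. sm a (x + y) = sm a x + sm a y) \<and>
     (\<forall>a b x. sm (a + b) x = sm a x + sm b x) \<and>
     (\<forall>a b x. sm (a * b) x = sm a (sm b x)) \<and>
     (\<forall>x. sm 1 x = x) \<and>
     (\<forall>a x y. sm a (x * y) = sm a x * y)"

definition vs_norm :: "(complex \<Rightarrow> 'a::comm_ring_1 \<Rightarrow> 'a) \<Rightarrow> ('a \<Rightarrow> real) \<Rightarrow> bool" where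
  "vs_norm sm N \<longleftrightarrow>
     (\<forall>x. 0 \<le> N x) \<and> (\<forall>x. N x = 0 \<longleftrightarrow> x = 0) \<and>
     (\<forall>x y. N (x + y) \<le> N x + N y) \<and>
     (\<forall>a x. N (sm a x) = cmod a * N x)"

definition normed_algebra :: "(complex \<Rightarrow> 'a::comm_ring_1 \<Rightarrow> 'a) \<Rightarrow> ('a \<Rightarrow> real) \<Rightarrow> bool" where
  "normed_algebra sm N \<longleftrightarrow> complex_algebra sm \<and> vs_norm sm N \<and>
     (\<forall>x y. N (x * y) \<le> N x * N y)"

definition norm_open :: "('a::comm_ring_1 \<Rightarrow> real) \<Rightarrow> 'a set \<Rightarrow> bool" where
  "norm_open N U \<longleftrightarrow> (\<forall>x\<in>U. \<exists>e>0. \<forall>y. N (y - x) < e \<longrightarrow> y \<in> U)"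

definition norm_closed :: "('a::comm_ring_1 \<Rightarrow> real) \<Rightarrow> 'a set \<Rightarrow> bool" where
  "norm_closed N S \<longleftrightarrow> norm_open N (- S)"

definition norm_bounded :: "('a::comm_ring_1 \<Rightarrow> real) \<Rightarrow> 'a set \<Rightarrow> bool" where
  "norm_bounded N S \<longleftrightarrow> (\<exists>C. \<forall>x\<in>S. N x \<le> C)"

definition idempotent_set :: "'a::comm_ring_1 set \<Rightarrow> bool" where
  "idempotent_set S \<longleftrightarrow> (\<forall>x\<in>S. \<forall>y\<in>S. x * y \<in> S)"

definition absolutely_convex :: "(complex \<Rightarrow> 'a::comm_ring_1 \<Rightarrow> 'a) \<Rightarrow> 'a set \<Rightarrow> bool" where
  "absolutely_convex sm S \<longleftrightarrow>
     (\<forall>x\<in>S. \<forall>y\<in>S. \<forall>a b. cmod a + cmod b \<le> 1 \<longrightarrow> sm a x + sm b y \<in> S)"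

definition mult_lin_functional :: "(complex \<Rightarrow> 'a::comm_ring_1 \<Rightarrow> 'a) \<Rightarrow> ('a \<Rightarrow> complex) \<Rightarrow> bool" where
  "mult_lin_functional sm \<phi> \<longleftrightarrow>
     (\<forall>x y. \<phi> (x + y) = \<phi> x + \<phi> y) \<and> (\<forall>a x. \<phi> (sm a x) = a * \<phi> x) \<and>
     (\<forall>x y. \<phi> (x * y) = \<phi> x * \<phi> y) \<and> (\<exists>x. \<phi> x \<noteq> 0)"

definition norm_continuous :: "('a::comm_ring_1 \<Rightarrow> real) \<Rightarrow> ('a \<Rightarrow> complex) \<Rightarrow> bool" where
  "norm_continuous N \<phi> \<longleftrightarrow>
     (\<forall>x. \<forall>e>0. \<exists>d>0. \<forall>y. N (y - x) < d \<longrightarrow> cmod (\<phi> y - \<phi> x) < e)"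

definition functionally_continuous :: "(complex \<Rightarrow> 'a::comm_ring_1 \<Rightarrow> 'a) \<Rightarrow> ('a \<Rightarrow> real) \<Rightarrow> bool" where
  "functionally_continuous sm N \<longleftrightarrow> (\<forall>\<phi>. mult_lin_functional sm \<phi> \<longrightarrow> norm_continuous N \<phi>)"

definition uniform_norm :: "(complex \<Rightarrow> 'a::comm_ring_1 \<Rightarrow> 'a) \<Rightarrow> ('a \<Rightarrow> real) \<Rightarrow> bool" where
  "uniform_norm sm M \<longleftrightarrow> vs_norm sm M \<and> (\<forall>x. M (x * x) = (M x)\<^sup>2)"

end

theory Submission
  imports Defs
begin


lemma sm_basic:
  assumes "complex_algebra sm"
  shows sm_zero_left: "sm 0 x = 0"
    and sm_zero_right: "sm a 0 = 0"
    and sm_add: "sm a (x + y) = sm a x + sm a y"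
    and sm_add_left: "sm (a + b) x = sm a x + sm b x"
    and sm_assoc: "sm (a * b) x = sm a (sm b x)"
    and sm_one: "sm 1 x = x"
    and sm_mult_left: "sm a (x * y) = sm a x * y"
    and sm_minus: "sm a (- x) = - sm a x"
    and sm_neg_one: "sm (-1) x = - x"
    and sm_diff: "sm a (x - y) = sm a x - sm a y"
    and sm_diff_left: "sm (a - b) x = sm a x - sm b x"
    and sm_mult_right: "x * sm a y = sm a (x * y)"
    and sm_mult_both: "sm a x * sm b y = sm (a * b) (x * y)"
proof -
  note d = assms[unfolded complex_algebra_def]
  have A: "sm a (x + y) = sm a x + sm a y" for a x y using d by blast
  have AL: "sm (a + b) x = sm a x + sm b x" for a b x using d by blast
  have AS: "sm (a * b) x = sm a (sm b x)" for a b x using d by blast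
  have ONE: "sm 1 x = x" for x using d by blast
  have MUL: "sm a (x * y) = sm a x * y" for a x y using d by blast
  have Z: "sm 0 x = 0" for x using AL[of 0 0 x] by simp
  have ZR: "sm a 0 = 0" for a using A[of a 0 0] by simp
  have MI: "sm a (- x) = - sm a x" for a x
  proof -
    have "sm a x + sm a (-x) = 0" using A[of a x "-x"] ZR[of a] by simp
    thus ?thesis by (metis add.inverse_unique)
  qed
  have NO: "sm (-1) x = - x" for x using AL[of "-1" 1 x] Z ONE by (simp add: eq_neg_iff_add_eq_0)
  have DI: "sm a (x - y) = sm a x - sm a y" for a x y using A[of a x "-y"] MI by simp
  have DL: "sm (a - b) x = sm a x - sm b x" for a b x
  proof -
    have "sm (a - b) x = sm a x + sm ((-1) * b) x" using AL[of a "-b" x] by simp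
    also have "... = sm a x - sm b x" using AS[of "-1" b x] NO[of "sm b x"] by simp
    finally show ?thesis .
  qed
  have MR: "x * sm a y = sm a (x * y)" for a x y using MUL[of a y x] by (simp add: mult.commute)
  have MB: "sm a x * sm b y = sm (a * b) (x * y)" for a b x y
    using MUL[of a x "sm b y"] MR[of x b y] AS[of a b "x*y"] by simp
  show "sm 0 x = 0" by (rule Z)
  show "sm a 0 = 0" by (rule ZR)
  show "sm a (x + y) = sm a x + sm a y" by (rule A)
  show "sm (a + b) x = sm a x + sm b x" by (rule AL)
  show "sm (a * b) x = sm a (sm b x)" by (rule AS)
  show "sm 1 x = x" by (rule ONE)
  show "sm a (x * y) = sm a x * y" by (rule MUL)
  show "sm a (- x) = - sm a x" by (rule MI)
  show "sm (-1) x = - x" by (rule NO)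
  show "sm a (x - y) = sm a x - sm a y" by (rule DI)
  show "sm (a - b) x = sm a x - sm b x" by (rule DL)
  show "x * sm a y = sm a (x * y)" by (rule MR)
  show "sm a x * sm b y = sm (a * b) (x * y)" by (rule MB)
qed

lemma norm_basic:
  assumes "complex_algebra sm" "vs_norm sm N"
  shows N_nonneg: "0 \<le> N x"
    and N_zero_iff: "N x = 0 \<longleftrightarrow> x = 0"
    and N_tri: "N (x + y) \<le> N x + N y"
    and N_scale: "N (sm a x) = cmod a * N x"
    and N_zero: "N 0 = 0"
    and N_minus: "N (- x) = N x"
    and N_commute: "N (x - y) = N (y - x)"
    and N_tri_diff: "N y \<le> N x + N (y - x)"
    and N_tri_diff2: "N x \<le> N y + N (y - x)"
proof -
  note d = assms(2)[unfolded vs_norm_def]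
  have T: "N (x + y) \<le> N x + N y" for x y using d by blast
  have S: "N (sm a x) = cmod a * N x" for a x using d by blast
  have MI: "N (- x) = N x" for x using S[of "-1" x] sm_neg_one[OF assms(1)] by simp
  have C: "N (x - y) = N (y - x)" for x y using MI[of "x - y"] by simp
  show "0 \<le> N x" "N x = 0 \<longleftrightarrow> x = 0" "N (x + y) \<le> N x + N y"
    "N (sm a x) = cmod a * N x" "N 0 = 0" "N (- x) = N x" "N (x - y) = N (y - x)"
    using d MI C by (blast, blast, blast, blast, metis, blast, blast)
  show "N y \<le> N x + N (y - x)" using T[of x "y - x"] by simp
  show "N x \<le> N y + N (y - x)" using T[of y "x - y"] C[of x y] by simp
qed


lemma ball_open:
  assumes "complex_algebra sm" "vs_norm sm P"
  shows "norm_open P {y. P y < c}"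
  unfolding norm_open_def
proof (intro ballI)
  fix x assume "x \<in> {y. P y < c}"
  hence "P x < c" by simp
  show "\<exists>e>0. \<forall>y. P (y - x) < e \<longrightarrow> y \<in> {y. P y < c}"
  proof (intro exI[of _ "c - P x"] conjI allI impI)
    show "0 < c - P x" using \<open>P x < c\<close> by simp
    fix y assume "P (y - x) < c - P x"
    moreover have "P y \<le> P x + P (y - x)" by (rule N_tri_diff[OF assms])
    ultimately show "y \<in> {y. P y < c}" by simp
  qed
qed

lemma dominate:
  assumes ca: "complex_algebra sm" and P: "vs_norm sm P" and Q: "vs_norm sm Q"
    and op: "norm_open Q {y. P y < 1}"
  shows "\<exists>c>0. \<forall>x. P x \<le> c * Q x"
proof -
  have "(0::'a) \<in> {y. P y < 1}" using N_zero[OF ca P] by simp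
  then obtain e where e: "e > 0" "\<And>y. Q (y - 0) < e \<Longrightarrow> P y < 1"
    using op unfolding norm_open_def by blast
  show ?thesis
  proof (intro exI[of _ "2 / e"] conjI allI)
    show "0 < 2 / e" using e by simp
    fix x
    show "P x \<le> 2 / e * Q x"
    proof (cases "x = 0")
      case True thus ?thesis using N_zero[OF ca P] N_zero[OF ca Q] by simp
    next
      case False
      hence qx: "Q x > 0" using N_nonneg[OF ca Q, of x] N_zero_iff[OF ca Q, of x] by simp
      define r where "r = e / (2 * Q x)"
      have r: "r > 0" using qx e by (simp add: r_def)
      have "Q (sm (of_real r) x) = r * Q x" using N_scale[OF ca Q] r by simp
      also have "... = e / 2" using qx by (simp add: r_def)
      finally have "Q (sm (of_real r) x - 0) < e" using e by simp
      hence "P (sm (of_real r) x) < 1" by (rule e(2))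
      hence "r * P x < 1" using N_scale[OF ca P] r by simp
      hence "e * P x < 2 * Q x" using qx by (simp add: r_def field_simps)
      thus ?thesis using e by (simp add: field_simps)
    qed
  qed
qed

lemma open_transfer:
  assumes "c > 0" "\<And>x. P x \<le> c * Q x" "norm_open P U"
  shows "norm_open Q U"
  unfolding norm_open_def
proof (intro ballI)
  fix x assume "x \<in> U"
  then obtain e where e: "e > 0" "\<And>y. P (y - x) < e \<Longrightarrow> y \<in> U"
    using assms(3) unfolding norm_open_def by blast
  show "\<exists>e>0. \<forall>y. Q (y - x) < e \<longrightarrow> y \<in> U"
  proof (intro exI[of _ "e / c"] conjI allI impI)
    show "0 < e / c" using e assms by simp
    fix y assume "Q (y - x) < e / c"
    hence "c * Q (y - x) < e" using assms(1) by (simp add: field_simps)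
    hence "P (y - x) < e" using assms(2)[of "y - x"] by linarith
    thus "y \<in> U" by (rule e(2))
  qed
qed

lemma pow2_unbounded:
  fixes a K :: real
  assumes "a > 1"
  shows "\<exists>n. K < a ^ (2 ^ n)"
proof -
  obtain n where "K < a ^ n" using real_arch_pow[OF assms] by blast
  moreover have "a ^ n \<le> a ^ (2 ^ n)"
    using assms by (intro power_increasing) (simp_all add: less_imp_le[OF less_exp])
  ultimately show ?thesis by (metis less_le_trans)
qed

lemma pow2_sq: "(x::'b::monoid_mult) ^ (2 ^ Suc n) = x ^ (2 ^ n) * x ^ (2 ^ n)"
  by (simp add: power_add[symmetric] mult_2)

lemma pow2_sq': "(a::real) ^ (2 ^ Suc n) = (a ^ 2) ^ (2 ^ n)"
  by (simp add: power_mult[symmetric])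

lemma uniform_submult:
  assumes ca: "complex_algebra sm" and M: "vs_norm sm M"
    and sq: "\<And>x. M (x * x) = (M x)\<^sup>2"
    and D: "\<And>x y. M (x * y) \<le> D * M x * M y"
  shows "M (x * y) \<le> M x * M y"
proof -
  have ind: "M (x * y) ^ (2 ^ n) \<le> D * (M x * M y) ^ (2 ^ n)" for n x y
  proof (induction n arbitrary: x y)
    case 0 thus ?case using D[of x y] by (simp add: mult.assoc)
  next
    case (Suc n)
    have "M (x * y) ^ (2 ^ Suc n) = (M (x * y) ^ 2) ^ (2 ^ n)" by (rule pow2_sq')
    also have "... = M ((x * y) * (x * y)) ^ (2 ^ n)" using sq[of "x * y"] by simp
    also have "... = M ((x * x) * (y * y)) ^ (2 ^ n)" by (simp add: mult_ac)
    also have "... \<le> D * (M (x * x) * M (y * y)) ^ (2 ^ n)" by (rule Suc.IH)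
    also have "... = D * (M x * M y) ^ (2 ^ Suc n)"
      using sq[of x] sq[of y] by (simp add: pow2_sq' power_mult_distrib power_mult)
    finally show ?case .
  qed
  show ?thesis
  proof (rule ccontr)
    assume "\<not> ?thesis"
    hence lt: "M x * M y < M (x * y)" by simp
    have b0: "0 \<le> M x * M y" using N_nonneg[OF ca M] by simp
    show False
    proof (cases "M x * M y = 0")
      case True
      hence "M (x * y) \<le> 0" using ind[where n=0 and x=x and y=y] by (simp only: True power_one_right power_0 mult_zero_right)
      thus False using lt True by simp
    next
      case False
      hence bp: "M x * M y > 0" using b0 False by linarith
      define r where "r = M (x * y) / (M x * M y)"
      have "r > 1" using lt bp by (simp add: r_def)
      then obtain n where n: "D < r ^ (2 ^ n)" using pow2_unbounded by blast
      have "r ^ (2 ^ n) = M (x * y) ^ (2 ^ n) / (M x * M y) ^ (2 ^ n)"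
        by (simp add: r_def power_divide)
      also have "... \<le> D" using ind[where n=n and x=x and y=y] bp by (simp add: divide_le_eq)
      finally show False using n by simp
    qed
  qed
qed

lemma uniform_pow2:
  fixes x :: "'a::comm_ring_1" and M :: "'a \<Rightarrow> real"
  assumes sq: "\<And>x. M (x * x) = (M x)\<^sup>2"
  shows "M (x ^ (2 ^ n)) = (M x) ^ (2 ^ n)"
proof (induction n)
  case 0 thus ?case by simp
next
  case (Suc n)
  show ?case using sq[of "x ^ (2 ^ n)"] Suc by (simp only: pow2_sq power2_eq_square)
qed

lemma idem_pow2:
  assumes "idempotent_set S" "x \<in> S"
  shows "x ^ (2 ^ n) \<in> S"
proof (induction n)
  case 0 thus ?case using assms by simp
next
  case (Suc n) thus ?case using assms(1) unfolding idempotent_set_def pow2_sq by blast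
qed


lemma ball_open_gt:
  assumes "complex_algebra sm" "vs_norm sm P"
  shows "norm_open P {y. c < P y}"
  unfolding norm_open_def
proof (intro ballI)
  fix x assume "x \<in> {y. c < P y}"
  hence "c < P x" by simp
  show "\<exists>e>0. \<forall>y. P (y - x) < e \<longrightarrow> y \<in> {y. c < P y}"
  proof (intro exI[of _ "P x - c"] conjI allI impI)
    show "0 < P x - c" using \<open>c < P x\<close> by simp
    fix y assume "P (y - x) < P x - c"
    moreover have "P x \<le> P y + P (y - x)" by (rule N_tri_diff2[OF assms])
    ultimately show "y \<in> {y. c < P y}" by simp
  qed
qed

lemma forward:
  assumes na: "normed_algebra sm N" and um: "uniform_norm sm M"
    and eq: "\<forall>U. norm_open M U \<longleftrightarrow> norm_open N U"
  shows "\<exists>B. norm_closed N B \<and> idempotent_set B \<and> absolutely_convex sm B \<and> norm_bounded N B \<and>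
            (\<forall>S. norm_closed N S \<and> idempotent_set S \<and> absolutely_convex sm S \<and> norm_bounded N S
                 \<longrightarrow> S \<subseteq> B)"
proof -
  have ca: "complex_algebra sm" and vN: "vs_norm sm N" and subN: "\<And>x y. N (x * y) \<le> N x * N y"
    using na unfolding normed_algebra_def by blast+
  have vM: "vs_norm sm M" and sq: "\<And>x. M (x * x) = (M x)\<^sup>2"
    using um unfolding uniform_norm_def by blast+
  obtain c1 where c1: "c1 > 0" "\<And>x. N x \<le> c1 * M x"
    using dominate[OF ca vN vM] eq ball_open[OF ca vN] by blast
  obtain c2 where c2: "c2 > 0" "\<And>x. M x \<le> c2 * N x"
    using dominate[OF ca vM vN] eq ball_open[OF ca vM] by blast
  have Mn: "0 \<le> M x" for x by (rule N_nonneg[OF ca vM])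
  have Nn: "0 \<le> N x" for x by (rule N_nonneg[OF ca vN])
  have D: "M (x * y) \<le> (c2 * c1 * c1) * M x * M y" for x y
  proof -
    have "M (x * y) \<le> c2 * N (x * y)" by (rule c2(2))
    also have "... \<le> c2 * (N x * N y)" using subN c2(1) by (simp add: mult_left_mono)
    also have "... \<le> c2 * ((c1 * M x) * (c1 * M y))"
      using c1 c2(1) Nn Mn by (intro mult_left_mono mult_mono) auto
    finally show ?thesis by (simp add: mult_ac)
  qed
  have sub: "M (x * y) \<le> M x * M y" for x y
    by (rule uniform_submult[OF ca vM sq D])
  define B where "B = {x. M x \<le> 1}"
  have "norm_open M {y. 1 < M y}" by (rule ball_open_gt[OF ca vM])
  moreover have "- B = {y. 1 < M y}" unfolding B_def by auto
  ultimately have cl: "norm_closed N B" unfolding norm_closed_def using eq by simp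
  have id: "idempotent_set B" unfolding idempotent_set_def B_def
  proof (intro ballI, simp)
    fix x y assume "M x \<le> 1" "M y \<le> 1"
    hence "M x * M y \<le> 1" using Mn by (simp add: mult_le_one)
    thus "M (x * y) \<le> 1" using sub[of x y] by simp
  qed
  have ac: "absolutely_convex sm B" unfolding absolutely_convex_def B_def
  proof (intro ballI allI impI, simp)
    fix x y a b assume h: "M x \<le> 1" "M y \<le> 1" "cmod a + cmod b \<le> 1"
    have "M (sm a x + sm b y) \<le> M (sm a x) + M (sm b y)" by (rule N_tri[OF ca vM])
    also have "... = cmod a * M x + cmod b * M y" using N_scale[OF ca vM] by simp
    also have "... \<le> cmod a * 1 + cmod b * 1"
      using h by (intro add_mono mult_left_mono) auto
    finally show "M (sm a x + sm b y) \<le> 1" using h by simp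
  qed
  have bd: "norm_bounded N B" unfolding norm_bounded_def B_def
  proof (intro exI[of _ c1] ballI, simp)
    fix x assume "M x \<le> 1"
    hence "c1 * M x \<le> c1" using c1(1) by (simp add: mult_le_cancel_left1)
    thus "N x \<le> c1" using c1(2)[of x] by simp
  qed
  have lg: "S \<subseteq> B" if S1: "idempotent_set S" and S2: "norm_bounded N S" for S
  proof
    fix x assume x: "x \<in> S"
    obtain C0 where C0: "\<And>z. z \<in> S \<Longrightarrow> N z \<le> C0" using S2 unfolding norm_bounded_def by blast
    show "x \<in> B" unfolding B_def
    proof (rule ccontr)
      assume "x \<notin> {x. M x \<le> 1}"
      hence "M x > 1" by simp
      then obtain n where n: "c2 * C0 < M x ^ (2 ^ n)" using pow2_unbounded by blast
      have "M x ^ (2 ^ n) = M (x ^ (2 ^ n))" using uniform_pow2[of M x n] sq by simp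
      also have "... \<le> c2 * N (x ^ (2 ^ n))" by (rule c2(2))
      also have "... \<le> c2 * C0" using C0[OF idem_pow2[OF S1 x]] c2(1) by simp
      finally show False using n by simp
    qed
  qed
  show ?thesis using cl id ac bd lg by blast
qed


definition clo :: "('a::comm_ring_1 \<Rightarrow> real) \<Rightarrow> 'a set \<Rightarrow> 'a set" where
  "clo N S = {z. \<forall>e>0. \<exists>h\<in>S. N (z - h) < e}"

lemma clo_props:
  assumes na: "normed_algebra sm N"
    and id: "idempotent_set S" and ac: "absolutely_convex sm S" and bd: "norm_bounded N S"
  shows "S \<subseteq> clo N S" "norm_closed N (clo N S)" "idempotent_set (clo N S)"
    "absolutely_convex sm (clo N S)" "norm_bounded N (clo N S)"
proof -
  have ca: "complex_algebra sm" and vN: "vs_norm sm N" and subN: "\<And>x y. N (x * y) \<le> N x * N y"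
    using na unfolding normed_algebra_def by blast+
  have Nn: "0 \<le> N x" for x by (rule N_nonneg[OF ca vN])
  have cloI: "\<forall>e>0. \<exists>h\<in>S. N (z - h) < e" if "z \<in> clo N S" for z
    using that unfolding clo_def by simp
  show "S \<subseteq> clo N S" unfolding clo_def
  proof (intro subsetI CollectI allI impI)
    fix z and e :: real assume "z \<in> S" "e > 0"
    thus "\<exists>h\<in>S. N (z - h) < e" using N_zero[OF ca vN] by (intro bexI[of _ z]) auto
  qed
  show "norm_closed N (clo N S)" unfolding norm_closed_def norm_open_def
  proof (intro ballI)
    fix z assume "z \<in> - clo N S"
    hence "\<not> (\<forall>e>0. \<exists>h\<in>S. N (z - h) < e)" unfolding clo_def by simp
    then obtain e where e0: "e > 0" "\<forall>h\<in>S. \<not> N (z - h) < e" by blast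
    hence e: "e > 0" "\<And>h. h \<in> S \<Longrightarrow> e \<le> N (z - h)" by (auto simp: not_less)
    show "\<exists>e>0. \<forall>y. N (y - z) < e \<longrightarrow> y \<in> - clo N S"
    proof (intro exI[of _ "e/2"] conjI allI impI)
      show "0 < e / 2" using e by simp
      fix y assume y: "N (y - z) < e / 2"
      show "y \<in> - clo N S"
      proof
        assume "y \<in> clo N S"
        moreover have "e / 2 > 0" using e(1) by simp
        ultimately obtain h where h: "h \<in> S" "N (y - h) < e / 2" using cloI by blast
        have "N (z - h) \<le> N (z - y) + N (y - h)"
          using N_tri[OF ca vN, of "z - y" "y - h"] by simp
        also have "N (z - y) = N (y - z)" by (rule N_commute[OF ca vN])
        finally have "N (z - h) < e" using y h by simp
        thus False using e(2)[OF h(1)] by simp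
      qed
    qed
  qed
  show "idempotent_set (clo N S)" unfolding idempotent_set_def
  proof (intro ballI)
    fix z z' assume z: "z \<in> clo N S" and z': "z' \<in> clo N S"
    show "z * z' \<in> clo N S" unfolding clo_def
    proof (intro CollectI allI impI)
      fix e :: real assume e: "e > 0"
      define R where "R = N z + N z' + 1"
      have R: "R > 0" "R \<ge> 1" using Nn[of z] Nn[of z'] by (auto simp: R_def)
      define d where "d = min 1 (e / (2 * R))"
      have d1: "d > 0" "d \<le> 1" "d \<le> e / (2 * R)"
        using e R by (auto simp: d_def)
      have "d * R \<le> e / (2 * R) * R" using d1 R by (intro mult_right_mono) auto
      also have "... = e / 2" using R by simp
      finally have d: "d > 0" "d \<le> 1" "d * R \<le> e / 2" using d1 by auto
      obtain h where h: "h \<in> S" "N (z - h) < d" using cloI[OF z] d by blast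
      obtain h' where h': "h' \<in> S" "N (z' - h') < d" using cloI[OF z'] d by blast
      have "z * z' - h * h' = (z - h) * z' + h * (z' - h')" by (simp add: algebra_simps)
      hence "N (z * z' - h * h') \<le> N ((z - h) * z') + N (h * (z' - h'))"
        using N_tri[OF ca vN] by metis
      also have "... \<le> N (z - h) * N z' + N h * N (z' - h')" by (intro add_mono subN)
      also have "... \<le> d * N z' + (N z + d) * d"
      proof (intro add_mono mult_mono)
        show "N h \<le> N z + d" using N_tri_diff[OF ca vN, where x=z and y=h] N_commute[OF ca vN, of h z] h
          by simp
      qed (use h h' Nn d in auto)
      also have "... = d * (N z' + N z + d)" by (simp add: algebra_simps)
      also have "... \<le> d * R" unfolding R_def using d by (intro mult_left_mono) auto
      finally have "N (z * z' - h * h') < e" using d e by simp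
      thus "\<exists>h\<in>S. N (z * z' - h) < e" using id h h' unfolding idempotent_set_def by blast
    qed
  qed
  show "absolutely_convex sm (clo N S)" unfolding absolutely_convex_def
  proof (intro ballI allI impI)
    fix z z' a b assume z: "z \<in> clo N S" and z': "z' \<in> clo N S" and ab: "cmod a + cmod b \<le> 1"
    show "sm a z + sm b z' \<in> clo N S" unfolding clo_def
    proof (intro CollectI allI impI)
      fix e :: real assume e: "e > 0"
      have e2: "e / 2 > 0" using e by simp
      obtain h where h: "h \<in> S" "N (z - h) < e / 2" using cloI[OF z] e2 by blast
      obtain h' where h': "h' \<in> S" "N (z' - h') < e / 2" using cloI[OF z'] e2 by blast
      have "sm a z + sm b z' - (sm a h + sm b h') = sm a (z - h) + sm b (z' - h')"
        unfolding sm_diff[OF ca] by (simp add: algebra_simps)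
      hence "N (sm a z + sm b z' - (sm a h + sm b h')) \<le> N (sm a (z - h)) + N (sm b (z' - h'))"
        using N_tri[OF ca vN] by metis
      also have "... = cmod a * N (z - h) + cmod b * N (z' - h')" using N_scale[OF ca vN] by simp
      also have "... \<le> cmod a * (e/2) + cmod b * (e/2)"
        using h h' by (intro add_mono mult_left_mono) auto
      also have "... = (cmod a + cmod b) * (e/2)" by (simp add: algebra_simps)
      also have "... \<le> 1 * (e/2)" using ab e by (intro mult_right_mono) auto
      finally have "N (sm a z + sm b z' - (sm a h + sm b h')) < e" using e by simp
      moreover have "sm a h + sm b h' \<in> S" using ac h h' ab unfolding absolutely_convex_def by blast
      ultimately show "\<exists>h\<in>S. N (sm a z + sm b z' - h) < e" by blast
    qed
  qed
  obtain C where C: "\<And>x. x \<in> S \<Longrightarrow> N x \<le> C" using bd unfolding norm_bounded_def by blast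
  show "norm_bounded N (clo N S)" unfolding norm_bounded_def
  proof (intro exI[of _ "C + 1"] ballI)
    fix z assume "z \<in> clo N S"
    hence "\<forall>e>0. \<exists>h\<in>S. N (z - h) < e" by (rule cloI)
    hence "\<exists>h\<in>S. N (z - h) < 1" by simp
    then obtain h where h: "h \<in> S" "N (z - h) < 1" by blast
    have "N z \<le> N h + N (z - h)" by (rule N_tri_diff[OF ca vN])
    thus "N z \<le> C + 1" using C[OF h(1)] h(2) by simp
  qed
qed


inductive_set pgen :: "(complex \<Rightarrow> 'a \<Rightarrow> 'a) \<Rightarrow> 'a::comm_ring_1 \<Rightarrow> 'a set" for sm y where
  base: "y ^ Suc n \<in> pgen sm y"
| comb: "z \<in> pgen sm y \<Longrightarrow> w \<in> pgen sm y \<Longrightarrow> cmod a + cmod b \<le> 1 \<Longrightarrow> sm a z + sm b w \<in> pgen sm y"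

lemma pgen_idem:
  assumes ca: "complex_algebra sm"
  shows "idempotent_set (pgen sm y)"
  unfolding idempotent_set_def
proof (intro ballI)
  fix z w assume z: "z \<in> pgen sm y" and w: "w \<in> pgen sm y"
  show "z * w \<in> pgen sm y" using z
  proof (induction rule: pgen.induct)
    case (base n)
    show ?case using w
    proof (induction rule: pgen.induct)
      case (base m)
      have "y ^ Suc n * y ^ Suc m = y ^ Suc (Suc (n + m))" by (simp add: power_add mult_ac)
      thus ?case using pgen.base by metis
    next
      case (comb z1 z2 a b)
      have "y ^ Suc n * (sm a z1 + sm b z2) = sm a (y ^ Suc n * z1) + sm b (y ^ Suc n * z2)"
        by (simp add: distrib_left sm_mult_right[OF ca])
      thus ?case using pgen.comb comb by metis
    qed
  next
    case (comb z1 z2 a b)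
    have "(sm a z1 + sm b z2) * w = sm a (z1 * w) + sm b (z2 * w)"
      by (simp add: distrib_right sm_mult_left[OF ca])
    thus ?case using pgen.comb comb by metis
  qed
qed

lemma pgen_ac: "absolutely_convex sm (pgen sm y)"
  unfolding absolutely_convex_def using pgen.comb by blast

lemma pgen_bound:
  assumes ca: "complex_algebra sm" and vN: "vs_norm sm N"
    and K: "\<And>n. N (y ^ Suc n) \<le> K" and K0: "K \<ge> 0"
  shows "z \<in> pgen sm y \<Longrightarrow> N z \<le> K"
proof (induction rule: pgen.induct)
  case (base n) thus ?case by (rule K)
next
  case (comb z w a b)
  have "N (sm a z + sm b w) \<le> N (sm a z) + N (sm b w)" by (rule N_tri[OF ca vN])
  also have "... = cmod a * N z + cmod b * N w" using N_scale[OF ca vN] by simp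
  also have "... \<le> cmod a * K + cmod b * K" using comb by (intro add_mono mult_left_mono) auto
  also have "... = (cmod a + cmod b) * K" by (simp add: algebra_simps)
  also have "... \<le> 1 * K" using comb K0 by (intro mult_right_mono) auto
  finally show ?case by simp
qed



lemma sq_in_B:
  assumes na: "normed_algebra sm N"
    and id: "idempotent_set B" and bdB: "\<And>z. z \<in> B \<Longrightarrow> N z \<le> C0" and C0: "C0 \<ge> 0"
    and lg: "\<forall>S. norm_closed N S \<and> idempotent_set S \<and> absolutely_convex sm S \<and> norm_bounded N S
                 \<longrightarrow> S \<subseteq> B"
    and yy: "y * y \<in> B"
  shows "y \<in> B"
proof -
  have ca: "complex_algebra sm" and vN: "vs_norm sm N" and subN: "\<And>x y. N (x * y) \<le> N x * N y"
    using na unfolding normed_algebra_def by blast+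
  have Nn: "0 \<le> N x" for x by (rule N_nonneg[OF ca vN])
  have pw: "(y * y) ^ Suc k \<in> B" for k
  proof (induction k)
    case 0 thus ?case using yy by simp
  next
    case (Suc k)
    have "(y * y) ^ Suc (Suc k) = (y * y) * (y * y) ^ Suc k" by simp
    thus ?case using id yy Suc unfolding idempotent_set_def by metis
  qed
  define K where "K = N y + C0 + N y * C0"
  have K0: "K \<ge> 0" using Nn[of y] C0 mult_nonneg_nonneg[of "N y" C0] unfolding K_def by linarith
  have bnd: "N (y ^ Suc n) \<le> K" for n
  proof -
    have "\<exists>k. n = 2 * k \<or> n = 2 * k + 1" by presburger
    then obtain k where "n = 2 * k \<or> n = 2 * k + 1" by blast
    thus ?thesis
    proof
      assume n: "n = 2 * k + 1"
      have "Suc n = 2 * Suc k" using n by simp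
      hence "y ^ Suc n = (y ^ 2) ^ Suc k" by (simp only: power_mult)
      hence "y ^ Suc n = (y * y) ^ Suc k" by (simp only: power2_eq_square)
      hence "N (y ^ Suc n) \<le> C0" using bdB pw by metis
      thus ?thesis using Nn[of y] C0 mult_nonneg_nonneg[of "N y" C0] unfolding K_def by linarith
    next
      assume n: "n = 2 * k"
      show ?thesis
      proof (cases k)
        case 0 thus ?thesis using n C0 Nn[of y] mult_nonneg_nonneg[of "N y" C0] unfolding K_def by simp
      next
        case (Suc j)
        have "y ^ Suc n = y * y ^ (2 * Suc j)" using n Suc by simp
        also have "... = y * (y ^ 2) ^ Suc j" by (simp only: power_mult)
        finally have "y ^ Suc n = y * (y * y) ^ Suc j" by (simp only: power2_eq_square)
        hence "N (y ^ Suc n) \<le> N y * N ((y * y) ^ Suc j)" using subN by metis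
        also have "... \<le> N y * C0" using bdB[OF pw] Nn[of y] by (intro mult_left_mono)
        finally show ?thesis using Nn[of y] C0 mult_nonneg_nonneg[of "N y" C0] unfolding K_def by linarith
      qed
    qed
  qed
  let ?H = "pgen sm y"
  have Hid: "idempotent_set ?H" by (rule pgen_idem[OF ca])
  have Hac: "absolutely_convex sm ?H" by (rule pgen_ac)
  have Hbd: "norm_bounded N ?H" unfolding norm_bounded_def
    using pgen_bound[OF ca vN bnd K0] by blast
  note cp = clo_props[OF na Hid Hac Hbd]
  have "clo N ?H \<subseteq> B" using lg cp(2-5) by blast
  moreover have "y \<in> ?H" using pgen.base[of y 0 sm] by simp
  ultimately show ?thesis using cp(1) by blast
qed



lemma sm_of_real_assoc:
  assumes "complex_algebra sm"
  shows "sm (of_real a) (sm (of_real b) x) = sm (of_real (a * b)) x"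
  using sm_assoc[OF assms, of "of_real a" "of_real b" x] by simp

lemma backward:
  assumes na: "normed_algebra sm N"
    and cl: "norm_closed N B" and id: "idempotent_set B" and ac: "absolutely_convex sm B"
    and bd: "norm_bounded N B"
    and lg: "\<forall>S. norm_closed N S \<and> idempotent_set S \<and> absolutely_convex sm S \<and> norm_bounded N S
                 \<longrightarrow> S \<subseteq> B"
  shows "\<exists>M. uniform_norm sm M \<and> (\<forall>U. norm_open M U \<longleftrightarrow> norm_open N U)"
proof -
  have ca: "complex_algebra sm" and vN: "vs_norm sm N" and subN: "\<And>x y. N (x * y) \<le> N x * N y"
    using na unfolding normed_algebra_def by blast+
  have Nn: "0 \<le> N x" for x by (rule N_nonneg[OF ca vN])
  have Nsc: "N (sm (of_real r) x) = r * N x" if "r > 0" for r x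
    using N_scale[OF ca vN, of "of_real r" x] that by (simp only: norm_of_real abs_of_pos[OF that])
  define U where "U = {x. N x \<le> 1}"
  have "norm_open N {y. 1 < N y}" by (rule ball_open_gt[OF ca vN])
  moreover have "- U = {y. 1 < N y}" unfolding U_def by auto
  ultimately have clU: "norm_closed N U" unfolding norm_closed_def by simp
  have idU: "idempotent_set U" unfolding idempotent_set_def U_def
  proof (intro ballI, simp)
    fix x y assume "N x \<le> 1" "N y \<le> 1"
    hence "N x * N y \<le> 1" using Nn by (simp add: mult_le_one)
    thus "N (x * y) \<le> 1" using subN[of x y] by simp
  qed
  have acU: "absolutely_convex sm U" unfolding absolutely_convex_def U_def
  proof (intro ballI allI impI, simp)
    fix x y a b assume h: "N x \<le> 1" "N y \<le> 1" "cmod a + cmod b \<le> 1"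
    have "N (sm a x + sm b y) \<le> N (sm a x) + N (sm b y)" by (rule N_tri[OF ca vN])
    also have "... = cmod a * N x + cmod b * N y" using N_scale[OF ca vN] by simp
    also have "... \<le> cmod a * 1 + cmod b * 1"
      using h by (intro add_mono mult_left_mono) auto
    finally show "N (sm a x + sm b y) \<le> 1" using h by simp
  qed
  have bdU: "norm_bounded N U" unfolding norm_bounded_def U_def by auto
  have UB: "U \<subseteq> B" using lg clU idU acU bdU by blast
  have bal: "sm a z \<in> B" if "z \<in> B" "cmod a \<le> 1" for a z
    using ac that sm_zero_left[OF ca, of z] unfolding absolutely_convex_def
    by (metis add.right_neutral norm_zero)
  obtain C0 where C0: "\<And>z. z \<in> B \<Longrightarrow> N z \<le> C0" using bd unfolding norm_bounded_def by blast
  define C where "C = max 1 C0"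
  have C: "C \<ge> 1" "\<And>z. z \<in> B \<Longrightarrow> N z \<le> C" unfolding C_def using C0 by (simp, meson le_max_iff_disj)
  define T where "T x = {t. t > 0 \<and> sm (of_real (1/t)) x \<in> B}" for x
  define M where "M x = Inf (T x)" for x
  have Tne: "T x \<noteq> {}" for x
  proof -
    have p: "N x + 1 > 0" using Nn[of x] by simp
    have "N (sm (of_real (1 / (N x + 1))) x) = (1 / (N x + 1)) * N x"
      using Nsc[of "1 / (N x + 1)" x] p by simp
    also have "... \<le> 1" using p by (simp add: field_simps)
    finally have "sm (of_real (1 / (N x + 1))) x \<in> B" using UB unfolding U_def by blast
    thus ?thesis using p unfolding T_def by blast
  qed
  have Tbdd: "bdd_below (T x)" for x unfolding T_def by (rule bdd_belowI[of _ 0]) auto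
  have Mn: "0 \<le> M x" for x unfolding M_def
    by (rule cInf_greatest[OF Tne]) (auto simp: T_def)
  have K1: "M x \<le> t" if "t > 0" "sm (of_real (1/t)) x \<in> B" for x t
  proof -
    have "t \<in> T x" using that unfolding T_def by simp
    thus ?thesis unfolding M_def by (rule cInf_lower[OF _ Tbdd])
  qed
  have K2: "sm (of_real (1/t)) x \<in> B" if "M x < t" for x t
  proof -
    have "\<exists>s\<in>T x. s < t" using that cInf_less_iff[OF Tne Tbdd, of x t] unfolding M_def by simp
    then obtain s where s: "s \<in> T x" "s < t" by blast
    have s0: "s > 0" "sm (of_real (1/s)) x \<in> B" using s unfolding T_def by auto
    have t0: "t > 0" using s0 s by simp
    have "cmod (of_real (s/t)) \<le> 1" using s0 t0 s by (simp only: norm_of_real, simp)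
    hence "sm (of_real (s/t)) (sm (of_real (1/s)) x) \<in> B" by (rule bal[OF s0(2)])
    moreover have "s / t * (1 / s) = 1 / t" using s0 by simp
    ultimately show ?thesis using sm_of_real_assoc[OF ca] by metis
  qed
  have MleN: "M x \<le> N x" for x
  proof (rule dense_ge)
    fix t assume t: "N x < t"
    hence t0: "t > 0" using Nn[of x] by simp
    have "N (sm (of_real (1/t)) x) = (1/t) * N x" using Nsc[of "1/t" x] t0 by simp
    also have "... \<le> 1" using t t0 by (simp add: field_simps)
    finally have "sm (of_real (1/t)) x \<in> B" using UB unfolding U_def by blast
    thus "M x \<le> t" by (rule K1[OF t0])
  qed
  have NleCM: "N x \<le> C * M x" for x
  proof -
    have "N x / C \<le> M x"
    proof (rule dense_ge)
      fix t assume t: "M x < t"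
      hence t0: "t > 0" using Mn[of x] by simp
      have "(1/t) * N x = N (sm (of_real (1/t)) x)" using Nsc[of "1/t" x] t0 by simp
      also have "... \<le> C" using C(2)[OF K2[OF t]] .
      finally have "N x \<le> C * t" using t0 by (simp add: field_simps)
      thus "N x / C \<le> t" using C(1) by (simp add: field_simps)
    qed
    thus ?thesis using C(1) by (simp add: field_simps)
  qed
  have Mz: "M x = 0 \<longleftrightarrow> x = 0" for x
  proof
    assume "M x = 0"
    hence "N x \<le> 0" using NleCM[of x] by simp
    thus "x = 0" using Nn[of x] N_zero_iff[OF ca vN, of x] by simp
  next
    assume "x = 0"
    thus "M x = 0" using MleN[of x] Mn[of x] N_zero[OF ca vN] by simp
  qed
  have tri: "M (x + y) \<le> M x + M y" for x y
  proof (rule dense_ge)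
    fix z assume z: "M x + M y < z"
    define d where "d = z - M x - M y"
    define t where "t = M x + d / 2"
    define s where "s = M y + d / 2"
    have d: "d > 0" using z by (simp add: d_def)
    have mx: "M x \<ge> 0" "M y \<ge> 0" using Mn by auto
    have ts1: "M x < t" "M y < s" "t + s = z" using d unfolding t_def s_def d_def by auto
    have ts: "M x < t" "M y < s" "t > 0" "s > 0" "t + s = z" "z > 0"
      using ts1 mx d by auto
    have ax: "sm (of_real (1/t)) x \<in> B" by (rule K2[OF ts(1)])
    have ay: "sm (of_real (1/s)) y \<in> B" by (rule K2[OF ts(2)])
    have coef: "cmod (of_real (t/z)) + cmod (of_real (s/z)) \<le> 1"
    proof -
      have "t / z + s / z = 1" using ts by (simp add: add_divide_distrib[symmetric])
      moreover have "cmod (of_real (t/z)) = t / z" "cmod (of_real (s/z)) = s / z"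
        using ts by (simp_all only: norm_of_real, simp_all)
      ultimately show ?thesis by simp
    qed
    have "sm (of_real (t/z)) (sm (of_real (1/t)) x) + sm (of_real (s/z)) (sm (of_real (1/s)) y) \<in> B"
      using ac ax ay coef unfolding absolutely_convex_def by blast
    moreover have "t / z * (1 / t) = 1 / z" "s / z * (1 / s) = 1 / z" using ts by auto
    ultimately have "sm (of_real (1/z)) x + sm (of_real (1/z)) y \<in> B"
      using sm_of_real_assoc[OF ca] by metis
    hence "sm (of_real (1/z)) (x + y) \<in> B" using sm_add[OF ca] by metis
    thus "M (x + y) \<le> z" by (rule K1[OF ts(6)])
  qed
  have scale_le: "M (sm a x) \<le> cmod a * M x" for a x
  proof (cases "a = 0")
    case True thus ?thesis using sm_zero_left[OF ca, of x] Mz[of 0] by simp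
  next
    case False
    hence a0: "cmod a > 0" by simp
    show ?thesis
    proof (rule dense_ge)
      fix z assume z: "cmod a * M x < z"
      have z0: "z > 0" using z mult_nonneg_nonneg[of "cmod a" "M x"] a0 Mn[of x] by linarith
      define t where "t = z / cmod a"
      have t: "M x < t" "t > 0" using z a0 z0 by (auto simp: t_def field_simps)
      define u where "u = of_real (1/z) * a * of_real t"
      have "cmod u = (1/z) * cmod a * t" using z0 t unfolding u_def norm_mult norm_of_real by simp
      also have "... = 1" using z0 a0 by (simp add: t_def)
      finally have "sm u (sm (of_real (1/t)) x) \<in> B" using bal[OF K2[OF t(1)]] by simp
      moreover have "u * of_real (1/t) = of_real (1/z) * a" using t(2)
        by (simp add: u_def field_simps)
      ultimately have "sm (of_real (1/z) * a) x \<in> B" using sm_assoc[OF ca] by metis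
      hence "sm (of_real (1/z)) (sm a x) \<in> B" using sm_assoc[OF ca] by metis
      thus "M (sm a x) \<le> z" by (rule K1[OF z0])
    qed
  qed
  have scale: "M (sm a x) = cmod a * M x" for a x
  proof (cases "a = 0")
    case True thus ?thesis using sm_zero_left[OF ca, of x] Mz[of 0] by simp
  next
    case False
    have "sm (1/a) (sm a x) = x" using False sm_assoc[OF ca, of "1/a" a x] sm_one[OF ca] by simp
    hence "M x \<le> cmod (1/a) * M (sm a x)" using scale_le[of "1/a" "sm a x"] by simp
    hence "cmod a * M x \<le> M (sm a x)" using False by (simp add: norm_divide field_simps)
    thus ?thesis using scale_le[of a x] by simp
  qed
  have vM: "vs_norm sm M" unfolding vs_norm_def using Mn Mz tri scale by blast
  have sqv: "sm (of_real (1/t)) x * sm (of_real (1/t)) x = sm (of_real (1/(t*t))) (x * x)" for t x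
    using sm_mult_both[OF ca] by simp
  have sq1: "sqrt (M (x * x)) \<le> M x" for x
  proof (rule dense_ge)
    fix t assume t: "M x < t"
    hence t0: "t > 0" using Mn[of x] by simp
    have "sm (of_real (1/(t*t))) (x * x) \<in> B"
      using id K2[OF t] sqv[of t x] unfolding idempotent_set_def by metis
    hence "M (x * x) \<le> t * t" using K1 t0 by simp
    hence "sqrt (M (x * x)) \<le> sqrt (t * t)" by (rule real_sqrt_le_mono)
    thus "sqrt (M (x * x)) \<le> t" using t0 by simp
  qed
  have sq2: "M x \<le> sqrt (M (x * x))" for x
  proof (rule dense_ge)
    fix t assume t: "sqrt (M (x * x)) < t"
    have t0: "t > 0" using t real_sqrt_ge_zero[OF Mn[of "x*x"]] by linarith
    have "M (x * x) < t * t"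
      using t real_sqrt_less_iff[of "M (x*x)" "t*t"] t0 real_sqrt_mult_self[of t] by simp
    hence "M (sm (of_real (1/(t*t))) (x * x)) < 1" using scale[of "of_real (1/(t*t))" "x*x"] t0 by (simp only: norm_of_real abs_of_pos, simp add: field_simps)
    hence "sm (of_real (1/1)) (sm (of_real (1/(t*t))) (x * x)) \<in> B" by (rule K2)
    hence "sm (of_real (1/t)) x * sm (of_real (1/t)) x \<in> B" using sqv sm_one[OF ca] by simp
    hence "sm (of_real (1/t)) x \<in> B"
      using sq_in_B[OF na id C(2) _ lg] C(1) by (meson dual_order.trans zero_le_one)
    thus "M x \<le> t" by (rule K1[OF t0])
  qed
  have sq: "M (x * x) = (M x)\<^sup>2" for x
  proof -
    have "M x = sqrt (M (x * x))" using sq1[of x] sq2[of x] by simp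
    thus ?thesis using Mn[of "x*x"] by simp
  qed
  have um: "uniform_norm sm M" unfolding uniform_norm_def using vM sq by blast
  have "norm_open M U \<longleftrightarrow> norm_open N U" for U
  proof
    assume "norm_open M U"
    show "norm_open N U" by (rule open_transfer[of 1 M N, OF _ _ \<open>norm_open M U\<close>]) (use MleN in auto)
  next
    assume "norm_open N U"
    show "norm_open M U" by (rule open_transfer[of C N M, OF _ _ \<open>norm_open N U\<close>]) (use C NleCM in auto)
  qed
  thus ?thesis using um by blast
qed


theorem theorem3p3:
  fixes sm :: "complex \<Rightarrow> 'a::comm_ring_1 \<Rightarrow> 'a" and N :: "'a \<Rightarrow> real"
  assumes "normed_algebra sm N"
    and "functionally_continuous sm N"
  shows "(\<exists>M. uniform_norm sm M \<and> (\<forall>U. norm_open M U \<longleftrightarrow> norm_open N U))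
     \<longleftrightarrow> (\<exists>B. norm_closed N B \<and> idempotent_set B \<and> absolutely_convex sm B \<and> norm_bounded N B \<and>
            (\<forall>S. norm_closed N S \<and> idempotent_set S \<and> absolutely_convex sm S \<and> norm_bounded N S
                 \<longrightarrow> S \<subseteq> B))"
proof
  assume "\<exists>M. uniform_norm sm M \<and> (\<forall>U. norm_open M U \<longleftrightarrow> norm_open N U)"
  then obtain M where "uniform_norm sm M" "\<forall>U. norm_open M U \<longleftrightarrow> norm_open N U" by blast
  thus "\<exists>B. norm_closed N B \<and> idempotent_set B \<and> absolutely_convex sm B \<and> norm_bounded N B \<and>
            (\<forall>S. norm_closed N S \<and> idempotent_set S \<and> absolutely_convex sm S \<and> norm_bounded N S
                 \<longrightarrow> S \<subseteq> B)"
    using forward[OF assms(1)] by blast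
next
  assume "\<exists>B. norm_closed N B \<and> idempotent_set B \<and> absolutely_convex sm B \<and> norm_bounded N B \<and>
            (\<forall>S. norm_closed N S \<and> idempotent_set S \<and> absolutely_convex sm S \<and> norm_bounded N S
                 \<longrightarrow> S \<subseteq> B)"
  then obtain B where "norm_closed N B" "idempotent_set B" "absolutely_convex sm B" "norm_bounded N B"
    "\<forall>S. norm_closed N S \<and> idempotent_set S \<and> absolutely_convex sm S \<and> norm_bounded N S
                 \<longrightarrow> S \<subseteq> B" by blast
  thus "\<exists>M. uniform_norm sm M \<and> (\<forall>U. norm_open M U \<longleftrightarrow> norm_open N U)"
    using backward[OF assms(1)] by blast
qed

end
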